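(* Consider the uplink system described in the context and suppose $L_u=1$ for all $u\in\{1,\dots,U\}$. Let $C^*$ be the optimal value of $$\max\ \log\Big|\sum_{u=1}^U \mathbf G_u(\mathbf w_u)\mathbf Q_u\mathbf G_u^H(\mathbf w_u)+\mathbf I_M\Big|$$ over $\mathbf Q_u\succeq\mathbf 0$, $\mathrm{tr}(\mathbf Q_u)\le P_u$, $0\le w_{u,n}\le W_u$, $w_{u,n}\ne w_{u,n'}$ ($n\ne n'$), $u=1,\dots,U$, and let $C^{\mathrm{ub}*}$ be the optimal value of $$\max\ \log\Big|\sum_{u=1}^U MN_u\mathbf A_{u,\mathrm R}\boldsymbol\Gamma_u\tilde{\mathbf Q}_u\boldsymbol\Gamma_u^H\mathbf A_{u,\mathrm R}^H+\mathbf I_M\Big|$$ over $\tilde{\mathbf Q}_u\in\mathbb C^{L_u\times L_u}$, $\tilde{\mathbf Q}_u\succeq\mathbf 0$, $\mathrm{tr}(\tilde{\mathbf Q}_u)\le L_uP_u$. Then $$C^*=C^{\mathrm{ub}*}=\log\Big|\sum_{u=1}^U MN_uP_u|\gamma_{u,1}|^2\mathbf a_{u,\mathrm R}(\beta_{u,1})\mathbf a_{u,\mathrm R}^H(\beta_{u,1})+\mathbf I_M\Big|.$$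
   Context: A base station (BS) has an $M$-antenna uniform linear array with spacing $d=\lambda/2$ ($\lambda$ the wavelength). User $u\in\{1,\dots,U\}$ has $N_u$ antennas at positions $w_{u,1},\dots,w_{u,N_u}\in[0,W_u]$ on a line, power budget $P_u>0$, and $L_u$ propagation paths to the BS with complex gains $\gamma_{u,l}$, angles of arrival $\beta_{u,l}\in[0,\pi]$ and angles of departure $\theta_{u,l}\in[0,\pi]$. Define $\mathbf a_{u,\mathrm R}(\beta)=\frac1{\sqrt M}[1,e^{-j\frac{2\pi}{\lambda}d\cos\beta},\dots,e^{-j\frac{2\pi}{\lambda}(M-1)d\cos\beta}]^T$, $\mathbf a_{u,\mathrm T}(\theta,\mathbf w_u)=\frac1{\sqrt{N_u}}[e^{-j\frac{2\pi}{\lambda}w_{u,1}\cos\theta},\dots,e^{-j\frac{2\pi}{\lambda}w_{u,N_u}\cos\theta}]^T$, $\boldsymbol\Gamma_u=\mathrm{diag}(\gamma_{u,1},\dots,\gamma_{u,L_u})$, $\mathbf A_{u,\mathrm R}=[\mathbf a_{u,\mathrm R}(\beta_{u,l})]_{l=1}^{L_u}$, $\mathbf A_{u,\mathrm T}(\mathbf w_u)=[\mathbf a_{u,\mathrm T}(\theta_{u,l},\mathbf w_u)]_{l=1}^{L_u}$, and the channel $\mathbf G_u(\mathbf w_u)=\sqrt{MN_u}\,\mathbf A_{u,\mathrm R}\boldsymbol\Gamma_u\mathbf A_{u,\mathrm T}^H(\mathbf w_u)$. $|\cdot|$ denotes determinant. *)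

theory Defs
  imports "Jordan_Normal_Form.Schur_Decomposition" "Jordan_Normal_Form.Determinant"
begin

text \<open>Receive steering vector a_R(beta) of the M-antenna ULA at the BS (spacing d, wavelength lam).
  Entries indexed 0..M-1.\<close>
definition aR :: "real \<Rightarrow> real \<Rightarrow> nat \<Rightarrow> real \<Rightarrow> complex Matrix.vec" where
  "aR lam d M beta = vec M (\<lambda>m. complex_of_real (1 / sqrt (real M)) *
       cis (- (2 * pi / lam) * real m * d * cos beta))"

text \<open>Transmit steering vector a_T(theta, w) for antenna positions w 1, ..., w N
  (entry j, 0-based, corresponds to antenna j+1).\<close>
definition aT :: "real \<Rightarrow> nat \<Rightarrow> (nat \<Rightarrow> real) \<Rightarrow> real \<Rightarrow> complex Matrix.vec" where
  "aT lam N w theta = vec N (\<lambda>j. complex_of_real (1 / sqrt (real N)) *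
       cis (- (2 * pi / lam) * w (j + 1) * cos theta))"

text \<open>A_R = [a_R(beta_1), ..., a_R(beta_L)] (M x L); column j is path j+1.\<close>
definition AR :: "real \<Rightarrow> real \<Rightarrow> nat \<Rightarrow> nat \<Rightarrow> (nat \<Rightarrow> real) \<Rightarrow> complex mat" where
  "AR lam d M L beta = mat M L (\<lambda>(i, j). aR lam d M (beta (j + 1)) $ i)"

definition AT :: "real \<Rightarrow> nat \<Rightarrow> nat \<Rightarrow> (nat \<Rightarrow> real) \<Rightarrow> (nat \<Rightarrow> real) \<Rightarrow> complex mat" where
  "AT lam N L theta w = mat N L (\<lambda>(i, j). aT lam N w (theta (j + 1)) $ i)"

definition Gam :: "nat \<Rightarrow> (nat \<Rightarrow> complex) \<Rightarrow> complex mat" where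
  "Gam L gamma = mat L L (\<lambda>(i, j). if i = j then gamma (i + 1) else 0)"

definition chanG :: "real \<Rightarrow> real \<Rightarrow> nat \<Rightarrow> nat \<Rightarrow> nat \<Rightarrow> (nat \<Rightarrow> complex)
     \<Rightarrow> (nat \<Rightarrow> real) \<Rightarrow> (nat \<Rightarrow> real) \<Rightarrow> (nat \<Rightarrow> real) \<Rightarrow> complex mat" where
  "chanG lam d M N L gamma beta theta w =
     complex_of_real (sqrt (real (M * N))) \<cdot>\<^sub>m
       (AR lam d M L beta * Gam L gamma * mat_adjoint (AT lam N L theta w))"

definition psd :: "nat \<Rightarrow> complex mat \<Rightarrow> bool" where
  "psd n Q \<longleftrightarrow> Q \<in> carrier_mat n n \<and> mat_adjoint Q = Q \<and>
     (\<forall>v \<in> carrier_vec n. 0 \<le> Re (conjugate v \<bullet> (Q *\<^sub>v v)))"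

definition msum :: "nat \<Rightarrow> nat set \<Rightarrow> (nat \<Rightarrow> complex mat) \<Rightarrow> complex mat" where
  "msum M S F = mat M M (\<lambda>(i, j). \<Sum>u\<in>S. F u $$ (i, j))"

definition mtrace :: "complex mat \<Rightarrow> complex" where
  "mtrace A = (\<Sum>i<dim_row A. A $$ (i, i))"

text \<open>log-determinant objective log |X| (natural logarithm; X Hermitian PD so det X is real > 0).\<close>
definition logdet :: "complex mat \<Rightarrow> real" where
  "logdet X = ln (Re (det X))"

end

theory Submission
  imports Defs
begin

lemma prod_list_real_ge1:
  assumes "\<forall>a\<in>set as. Im a = 0 \<and> Re a \<le> 0"
  shows "Im (\<Prod>a\<leftarrow>as. 1 - a) = 0 \<and> Re (\<Prod>a\<leftarrow>as. 1 - a) \<ge> 1"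
  using assms
proof (induction as)
  case Nil
  then show ?case by simp
next
  case (Cons a as)
  then have ih: "Im (\<Prod>a\<leftarrow>as. 1 - a) = 0" "Re (\<Prod>a\<leftarrow>as. 1 - a) \<ge> 1" and a: "Im a = 0" "Re a \<le> 0" by auto
  have "Re ((1 - a) * (\<Prod>a\<leftarrow>as. 1 - a)) = (1 - Re a) * Re (\<Prod>a\<leftarrow>as. 1 - a)"
    using ih a by simp
  also have "\<dots> \<ge> 1 * 1" using ih a
    by (intro mult_mono) auto
  finally show ?case using ih a by simp
qed

lemma det_one_plus:
  fixes A :: "complex mat"
  assumes A: "A \<in> carrier_mat n n"
    and ev: "\<And>k. eigenvalue A k \<Longrightarrow> Im k = 0 \<and> Re k \<ge> 0"
  shows "Im (det (1\<^sub>m n + A)) = 0 \<and> Re (det (1\<^sub>m n + A)) \<ge> 1"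
proof -
  have mA: "- A \<in> carrier_mat n n" using A by simp
  obtain as where cp: "char_poly (- A) = (\<Prod>a\<leftarrow>as. [:- a, 1:])" and len: "length as = n"
    using char_poly_factorized[OF mA] by blast
  have "- char_matrix (- A) 1 = 1\<^sub>m n + A"
    unfolding char_matrix_def by (rule eq_matI, insert A, auto)
  hence d: "det (1\<^sub>m n + A) = poly (char_poly (- A)) 1"
    using char_poly_matrix[OF mA, of 1] by simp
  also have "\<dots> = (\<Prod>a\<leftarrow>as. 1 - a)"
    unfolding cp poly_prod_list by (simp add: o_def)
  finally have d: "det (1\<^sub>m n + A) = (\<Prod>a\<leftarrow>as. 1 - a)" .
  have "\<forall>a\<in>set as. Im a = 0 \<and> Re a \<le> 0"
  proof
    fix a assume a: "a \<in> set as"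
    have "poly (char_poly (- A)) a = 0"
      unfolding cp poly_prod_list using a
      by (induction as) (auto simp: o_def)
    hence "eigenvalue (- A) a" using eigenvalue_root_char_poly[OF mA] by simp
    then obtain v where v: "eigenvector (- A) v a" unfolding eigenvalue_def by blast
    hence vc: "v \<in> carrier_vec n" "v \<noteq> 0\<^sub>v n" "(- A) *\<^sub>v v = a \<cdot>\<^sub>v v"
      unfolding eigenvector_def using A by auto
    have e: "- (A *\<^sub>v v) = a \<cdot>\<^sub>v v" using vc A by simp
    have "A *\<^sub>v v = - (- (A *\<^sub>v v))" by simp
    also have "\<dots> = (- a) \<cdot>\<^sub>v v" unfolding e by (rule eq_vecI, auto)
    finally have "eigenvector A v (- a)"
      unfolding eigenvector_def using A vc by auto
    hence "eigenvalue A (- a)" unfolding eigenvalue_def by blast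
    from ev[OF this] show "Im a = 0 \<and> Re a \<le> 0" by simp
  qed
  from prod_list_real_ge1[OF this] d show ?thesis by simp
qed

definition qf :: "complex mat \<Rightarrow> complex vec \<Rightarrow> complex" where
  "qf X v = conjugate v \<bullet> (X *\<^sub>v v)"

definition nn :: "nat \<Rightarrow> complex mat \<Rightarrow> bool" where
  "nn n X \<longleftrightarrow> X \<in> carrier_mat n n \<and> (\<forall>v\<in>carrier_vec n. Im (qf X v) = 0 \<and> Re (qf X v) \<ge> 0)"

lemma cv_real:
  assumes v: "v \<in> carrier_vec n"
  shows "conjugate v \<bullet> v = complex_of_real (\<Sum>i<n. (cmod (v $ i))\<^sup>2)"
proof -
  have "conjugate v \<bullet> v = (\<Sum>i<n. cnj (v $ i) * v $ i)"
    using v unfolding scalar_prod_def by (auto simp: atLeast0LessThan intro!: sum.cong)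
  also have "\<dots> = (\<Sum>i<n. complex_of_real ((cmod (v $ i))\<^sup>2))"
    by (rule sum.cong, simp, metis complex_norm_square mult.commute)
  finally show ?thesis by simp
qed

lemma cv_pos:
  assumes v: "v \<in> carrier_vec n" and nz: "v \<noteq> 0\<^sub>v n"
  shows "(\<Sum>i<n. (cmod (v $ i))\<^sup>2) > 0"
proof -
  obtain i where i: "i < n" "v $ i \<noteq> 0"
    using nz v by (metis eq_vecI carrier_vecD index_zero_vec(1) index_zero_vec(2))
  have "(cmod (v $ i))\<^sup>2 \<le> (\<Sum>i<n. (cmod (v $ i))\<^sup>2)"
    by (rule member_le_sum) (use i in auto)
  moreover have "(cmod (v $ i))\<^sup>2 > 0" using i by simp
  ultimately show ?thesis by linarith
qed

lemma qf_add:
  assumes "A \<in> carrier_mat n n" "B \<in> carrier_mat n n" "v \<in> carrier_vec n"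
  shows "qf (A + B) v = qf A v + qf B v"
  unfolding qf_def using assms
  by (simp add: add_mult_distrib_mat_vec[of A n n B v] scalar_prod_add_distrib[of _ n])

lemma qf_one:
  assumes "v \<in> carrier_vec n"
  shows "qf (1\<^sub>m n) v = conjugate v \<bullet> v"
  unfolding qf_def using assms by simp

lemma nn_eig:
  assumes S: "nn n S" and e: "eigenvalue S k"
  shows "Im k = 0 \<and> Re k \<ge> 0"
proof -
  have Sc: "S \<in> carrier_mat n n" using S unfolding nn_def by auto
  obtain v where v: "v \<in> carrier_vec n" "v \<noteq> 0\<^sub>v n" "S *\<^sub>v v = k \<cdot>\<^sub>v v"
    using e Sc unfolding eigenvalue_def eigenvector_def by auto
  define s where "s = (\<Sum>i<n. (cmod (v $ i))\<^sup>2)"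
  have s: "s > 0" using cv_pos[OF v(1,2)] unfolding s_def .
  have "qf S v = k * (conjugate v \<bullet> v)"
    unfolding qf_def v(3) using v(1) by simp
  also have "\<dots> = k * complex_of_real s" unfolding s_def cv_real[OF v(1)] ..
  finally have q: "qf S v = k * complex_of_real s" .
  have "Im (qf S v) = 0" "Re (qf S v) \<ge> 0" using S v(1) unfolding nn_def by auto
  with q s show ?thesis by (simp add: zero_le_mult_iff)
qed

lemma det_nn:
  assumes S: "nn n S"
  shows "Im (det (1\<^sub>m n + S)) = 0 \<and> Re (det (1\<^sub>m n + S)) \<ge> 1"
  using det_one_plus[of S n] nn_eig[OF S] S unfolding nn_def by auto

lemma det_mono:
  assumes S: "nn n S" and D: "nn n D"
  shows "Im (det (1\<^sub>m n + S + D)) = 0 \<and> Re (det (1\<^sub>m n + S)) \<le> Re (det (1\<^sub>m n + S + D))"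
proof -
  have Sc: "S \<in> carrier_mat n n" and Dc: "D \<in> carrier_mat n n" using S D unfolding nn_def by auto
  define B where "B = 1\<^sub>m n + S"
  have Bc: "B \<in> carrier_mat n n" using Sc unfolding B_def by simp
  have dB: "Im (det B) = 0" "Re (det B) \<ge> 1" using det_nn[OF S] unfolding B_def by auto
  hence "det B \<noteq> 0" by auto
  from det_non_zero_imp_unit[OF Bc this, of "()"]
  obtain Bi where Bi: "Bi \<in> carrier_mat n n" "Bi * B = 1\<^sub>m n"
    unfolding Units_def ring_mat_def by auto
  have BBi: "B * Bi = 1\<^sub>m n" by (rule mat_mult_left_right_inverse[OF Bi(1) Bc Bi(2)])
  define A where "A = Bi * D"
  have Ac: "A \<in> carrier_mat n n" using Bi Dc unfolding A_def by simp
  have eq: "1\<^sub>m n + S + D = B * (1\<^sub>m n + A)"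
  proof -
    have "B * (1\<^sub>m n + A) = B * 1\<^sub>m n + B * A"
      using mult_add_distrib_mat[OF Bc one_carrier_mat Ac] .
    also have "B * A = (B * Bi) * D" unfolding A_def using Bc Bi Dc by simp
    also have "\<dots> = D" unfolding BBi using Dc by simp
    also have "B * 1\<^sub>m n = B" using Bc by simp
    finally show ?thesis unfolding B_def by simp
  qed
  have evA: "Im k = 0 \<and> Re k \<ge> 0" if e: "eigenvalue A k" for k
  proof -
    obtain v where v: "v \<in> carrier_vec n" "v \<noteq> 0\<^sub>v n" "A *\<^sub>v v = k \<cdot>\<^sub>v v"
      using e Ac unfolding eigenvalue_def eigenvector_def by auto
    have "D *\<^sub>v v = (B * Bi * D) *\<^sub>v v" unfolding BBi using Dc by simp
    also have "B * Bi * D = B * A" unfolding A_def using Bc Bi(1) Dc by simp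
    also have "(B * A) *\<^sub>v v = B *\<^sub>v (A *\<^sub>v v)" using Bc Ac v(1) by simp
    also have "\<dots> = k \<cdot>\<^sub>v (B *\<^sub>v v)" unfolding v(3) using Bc v(1) by (rule mult_mat_vec)
    finally have Dv: "D *\<^sub>v v = k \<cdot>\<^sub>v (B *\<^sub>v v)" .
    have qD: "qf D v = k * qf B v" unfolding qf_def Dv using Bc v(1) by simp
    define s where "s = (\<Sum>i<n. (cmod (v $ i))\<^sup>2)"
    have s: "s > 0" using cv_pos[OF v(1,2)] unfolding s_def .
    have qB: "qf B v = complex_of_real s + qf S v"
      unfolding B_def qf_add[OF one_carrier_mat Sc v(1)] qf_one[OF v(1)] cv_real[OF v(1)] s_def ..
    have "Im (qf S v) = 0" "Re (qf S v) \<ge> 0" "Im (qf D v) = 0" "Re (qf D v) \<ge> 0"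
      using S D v(1) unfolding nn_def by auto
    with qB s have b: "Im (qf B v) = 0" "Re (qf B v) > 0" by auto
    have "k = qf D v / qf B v" using qD b by auto
    with b \<open>Im (qf D v) = 0\<close> \<open>Re (qf D v) \<ge> 0\<close> show ?thesis
      by (simp add: complex_eq_iff Im_divide Re_divide)
  qed
  have dA: "Im (det (1\<^sub>m n + A)) = 0" "Re (det (1\<^sub>m n + A)) \<ge> 1"
    using det_one_plus[OF Ac evA] by auto
  have d: "det (1\<^sub>m n + S + D) = det B * det (1\<^sub>m n + A)"
    unfolding eq using Bc Ac by (simp add: det_mult[of _ n])
  have "Re (det B) * 1 \<le> Re (det B) * Re (det (1\<^sub>m n + A))"
    using dA dB by (intro mult_left_mono) auto
  then show ?thesis unfolding d using dA dB unfolding B_def by simp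
qed

lemma qf_sum:
  assumes X: "X \<in> carrier_mat n n" and v: "v \<in> carrier_vec n"
  shows "qf X v = (\<Sum>i<n. \<Sum>j<n. cnj (v $ i) * X $$ (i, j) * v $ j)"
  unfolding qf_def using X v
  by (auto simp: scalar_prod_def sum_distrib_left atLeast0LessThan mult_ac intro!: sum.cong)

lemma adj_index[simp]:
  assumes "i < dim_col A" "j < dim_row A"
  shows "mat_adjoint A $$ (i, j) = cnj (A $$ (j, i))"
  using assms unfolding mat_adjoint_def by (simp add: mat_of_rows_def)

lemma adj_dims[simp]: "dim_row (mat_adjoint A) = dim_col A" "dim_col (mat_adjoint A) = dim_row A"
  unfolding mat_adjoint_def by (simp_all add: mat_of_rows_def)

lemma qf_herm:
  assumes Q: "Q \<in> carrier_mat n n" and h: "mat_adjoint Q = Q" and v: "v \<in> carrier_vec n"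
  shows "Im (qf Q v) = 0"
proof -
  have Qe: "Q $$ (i, j) = cnj (Q $$ (j, i))" if "i < n" "j < n" for i j
  proof -
    have "mat_adjoint Q $$ (i, j) = cnj (Q $$ (j, i))"
      using Q that by simp
    thus ?thesis using h by simp
  qed
  have "cnj (qf Q v) = (\<Sum>i<n. \<Sum>j<n. v $ i * cnj (Q $$ (i, j)) * cnj (v $ j))"
    unfolding qf_sum[OF Q v] by simp
  also have "\<dots> = (\<Sum>i<n. \<Sum>j<n. v $ i * Q $$ (j, i) * cnj (v $ j))"
    by (intro sum.cong refl, subst Qe, auto)
  also have "\<dots> = (\<Sum>j<n. \<Sum>i<n. cnj (v $ j) * Q $$ (j, i) * v $ i)"
    by (subst sum.swap) (simp add: mult_ac)
  also have "\<dots> = qf Q v" unfolding qf_sum[OF Q v] ..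
  finally have "cnj (qf Q v) = qf Q v" .
  thus ?thesis by (metis Reals_cnj_iff complex_is_Real_iff)
qed

lemma unit_sum:
  assumes t: "t \<in> carrier_vec n" and ts: "(\<Sum>k<n. (cmod (t $ k))\<^sup>2) = 1"
  shows "(\<Sum>k<n. t $ k * cnj (t $ k)) = 1"
proof -
  have "(\<Sum>k<n. t $ k * cnj (t $ k)) = (\<Sum>k<n. complex_of_real ((cmod (t $ k))\<^sup>2))"
    by (rule sum.cong, simp, metis complex_norm_square)
  also have "\<dots> = 1" using ts by (metis of_real_1 of_real_sum)
  finally show ?thesis .
qed

lemma qf_le_trace:
  assumes Q: "psd n Q" and t: "t \<in> carrier_vec n" and ts: "(\<Sum>k<n. (cmod (t $ k))\<^sup>2) = 1"
  shows "Re (qf Q t) \<le> Re (mtrace Q)"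
proof -
  have Qc: "Q \<in> carrier_mat n n" using Q unfolding psd_def by auto
  define r where "r k = vec n (\<lambda>i. (if i = k then 1 else 0) - t $ i * cnj (t $ k))" for k
  have rc: "r k \<in> carrier_vec n" for k unfolding r_def by simp
  have key: "(\<Sum>k<n. cnj (r k $ i) * r k $ j) = (if i = j then 1 else 0) - cnj (t $ i) * t $ j"
    if ij: "i < n" "j < n" for i j
  proof -
    have gen: "\<And>a b c d :: complex. (a - b) * (c - d) = a * c - a * d - b * c + b * d"
      by (simp add: algebra_simps)
    have "(\<Sum>k<n. cnj (r k $ i) * r k $ j) = (\<Sum>k<n. ((if i = k then 1 else 0) - cnj (t $ i) * t $ k)
         * ((if j = k then 1 else 0) - t $ j * cnj (t $ k)))"
      using ij by (intro sum.cong refl) (simp add: r_def)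
    also have "\<dots> = (\<Sum>k<n. (if i = k then 1 else 0) * (if j = k then 1 else 0))
        - (\<Sum>k<n. (if i = k then 1 else 0) * (t $ j * cnj (t $ k)))
        - (\<Sum>k<n. cnj (t $ i) * t $ k * (if j = k then 1 else 0))
        + (\<Sum>k<n. cnj (t $ i) * t $ k * (t $ j * cnj (t $ k)))"
      unfolding sum_subtractf[symmetric] sum.distrib[symmetric] by (simp only: gen)
    also have "\<dots> = (if i = j then 1 else 0) - t $ j * cnj (t $ i) - cnj (t $ i) * t $ j
         + cnj (t $ i) * t $ j * (\<Sum>k<n. t $ k * cnj (t $ k))"
    proof -
      have e1: "(\<Sum>k<n. (if i = k then 1 else 0) * (if j = k then 1 else 0)) = (if i = j then 1 else (0::complex))"
      proof -
        have "(\<Sum>k<n. (if i = k then 1 else 0) * (if j = k then 1 else 0)) = (\<Sum>k<n. if i = k then (if j = k then 1 else 0) else (0::complex))"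
          by (intro sum.cong refl) simp
        thus ?thesis using ij by simp
      qed
      have e2: "(\<Sum>k<n. (if i = k then 1 else 0) * (t $ j * cnj (t $ k))) = t $ j * cnj (t $ i)"
      proof -
        have "(\<Sum>k<n. (if i = k then 1 else 0) * (t $ j * cnj (t $ k))) = (\<Sum>k<n. if i = k then t $ j * cnj (t $ k) else 0)"
          by (intro sum.cong refl) simp
        thus ?thesis using ij by simp
      qed
      have e3: "(\<Sum>k<n. cnj (t $ i) * t $ k * (if j = k then 1 else 0)) = cnj (t $ i) * t $ j"
      proof -
        have "(\<Sum>k<n. cnj (t $ i) * t $ k * (if j = k then 1 else 0)) = (\<Sum>k<n. if j = k then cnj (t $ i) * t $ k else 0)"
          by (intro sum.cong refl) simp
        thus ?thesis using ij by simp
      qed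
      have e4: "(\<Sum>k<n. cnj (t $ i) * t $ k * (t $ j * cnj (t $ k))) = cnj (t $ i) * t $ j * (\<Sum>k<n. t $ k * cnj (t $ k))"
        by (simp add: sum_distrib_left mult_ac)
      show ?thesis unfolding e1 e2 e3 e4 ..
    qed
    also have "\<dots> = (if i = j then 1 else 0) - cnj (t $ i) * t $ j"
      unfolding unit_sum[OF t ts] by simp
    finally show ?thesis .
  qed
  have "(\<Sum>k<n. qf Q (r k)) = (\<Sum>k<n. \<Sum>i<n. \<Sum>j<n. cnj (r k $ i) * Q $$ (i, j) * r k $ j)"
    using qf_sum[OF Qc rc] by simp
  also have "\<dots> = (\<Sum>i<n. \<Sum>k<n. \<Sum>j<n. cnj (r k $ i) * Q $$ (i, j) * r k $ j)"
    by (rule sum.swap)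
  also have "\<dots> = (\<Sum>i<n. \<Sum>j<n. \<Sum>k<n. cnj (r k $ i) * Q $$ (i, j) * r k $ j)"
    by (rule sum.cong[OF refl], rule sum.swap)
  also have "\<dots> = (\<Sum>i<n. \<Sum>j<n. Q $$ (i, j) * (\<Sum>k<n. cnj (r k $ i) * r k $ j))"
    by (simp add: sum_distrib_left mult_ac)
  also have "\<dots> = (\<Sum>i<n. \<Sum>j<n. Q $$ (i, j) * ((if i = j then 1 else 0) - cnj (t $ i) * t $ j))"
    by (intro sum.cong refl, simp add: key)
  also have "\<dots> = (\<Sum>i<n. \<Sum>j<n. (if i = j then Q $$ (i, j) else 0)) - (\<Sum>i<n. \<Sum>j<n. cnj (t $ i) * Q $$ (i, j) * t $ j)"
    unfolding sum_subtractf[symmetric] by (intro sum.cong refl) (auto simp: algebra_simps)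
  also have "\<dots> = (\<Sum>i<n. Q $$ (i, i)) - qf Q t"
    unfolding qf_sum[OF Qc t] by simp
  also have "(\<Sum>i<n. Q $$ (i, i)) = mtrace Q" unfolding mtrace_def using Qc by simp
  finally have e: "(\<Sum>k<n. qf Q (r k)) = mtrace Q - qf Q t" .
  have "0 \<le> (\<Sum>k<n. Re (qf Q (r k)))"
    using Q rc unfolding psd_def qf_def by (intro sum_nonneg) auto
  also have "\<dots> = Re (mtrace Q - qf Q t)" unfolding e[symmetric] by simp
  finally show ?thesis by simp
qed

definition Em :: "nat \<Rightarrow> complex vec \<Rightarrow> complex mat" where
  "Em m a = Matrix.mat m m (\<lambda>(i, j). a $ i * cnj (a $ j))"

definition Fm :: "nat \<Rightarrow> nat set \<Rightarrow> (nat \<Rightarrow> real) \<Rightarrow> (nat \<Rightarrow> complex vec) \<Rightarrow> complex mat" where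
  "Fm m S c a = msum m S (\<lambda>u. complex_of_real (c u) \<cdot>\<^sub>m Em m (a u)) + 1\<^sub>m m"

lemma nn_E:
  assumes a: "a \<in> carrier_vec m" and c: "c \<ge> 0"
  shows "nn m (complex_of_real c \<cdot>\<^sub>m Em m a)"
  unfolding nn_def
proof (intro conjI ballI)
  show "complex_of_real c \<cdot>\<^sub>m Em m a \<in> carrier_mat m m" unfolding Em_def by simp
  fix v :: "complex vec" assume v: "v \<in> carrier_vec m"
  define z where "z = (\<Sum>i<m. cnj (v $ i) * a $ i)"
  have "qf (complex_of_real c \<cdot>\<^sub>m Em m a) v = (\<Sum>i<m. \<Sum>j<m. cnj (v $ i) * (complex_of_real c * (a $ i * cnj (a $ j))) * v $ j)"
    by (subst qf_sum[of _ m], unfold Em_def, simp, rule v, intro sum.cong refl, simp)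
  also have "\<dots> = complex_of_real c * (z * cnj z)"
    unfolding z_def by (simp add: sum_distrib_left sum_distrib_right mult_ac, rule sum.swap)
  also have "\<dots> = complex_of_real (c * (cmod z)\<^sup>2)"
    unfolding of_real_mult complex_norm_square ..
  finally have q: "qf (complex_of_real c \<cdot>\<^sub>m Em m a) v = complex_of_real (c * (cmod z)\<^sup>2)" .
  show "Im (qf (complex_of_real c \<cdot>\<^sub>m Em m a) v) = 0" unfolding q by simp
  show "Re (qf (complex_of_real c \<cdot>\<^sub>m Em m a) v) \<ge> 0" unfolding q using c by simp
qed

lemma nn_msum:
  assumes fin: "finite S" and F: "\<forall>u\<in>S. nn m (F u)"
  shows "nn m (msum m S F)"
  unfolding nn_def
proof (intro conjI ballI)
  show mc: "msum m S F \<in> carrier_mat m m" unfolding msum_def by simp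
  fix v :: "complex vec" assume v: "v \<in> carrier_vec m"
  have Fc: "F u \<in> carrier_mat m m" if "u \<in> S" for u using F that unfolding nn_def by auto
  have "qf (msum m S F) v = (\<Sum>i<m. \<Sum>j<m. cnj (v $ i) * (\<Sum>u\<in>S. F u $$ (i, j)) * v $ j)"
    unfolding qf_sum[OF mc v] by (intro sum.cong refl) (simp add: msum_def)
  also have "\<dots> = (\<Sum>i<m. \<Sum>j<m. \<Sum>u\<in>S. cnj (v $ i) * F u $$ (i, j) * v $ j)"
    by (simp add: sum_distrib_left sum_distrib_right)
  also have "\<dots> = (\<Sum>i<m. \<Sum>u\<in>S. \<Sum>j<m. cnj (v $ i) * F u $$ (i, j) * v $ j)"
    by (rule sum.cong[OF refl], rule sum.swap)
  also have "\<dots> = (\<Sum>u\<in>S. \<Sum>i<m. \<Sum>j<m. cnj (v $ i) * F u $$ (i, j) * v $ j)"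
    by (rule sum.swap)
  also have "\<dots> = (\<Sum>u\<in>S. qf (F u) v)"
    by (rule sum.cong[OF refl], subst qf_sum[OF Fc v], auto)
  finally have q: "qf (msum m S F) v = (\<Sum>u\<in>S. qf (F u) v)" .
  have "\<forall>u\<in>S. Im (qf (F u) v) = 0 \<and> Re (qf (F u) v) \<ge> 0" using F v unfolding nn_def by auto
  thus "Im (qf (msum m S F) v) = 0" "Re (qf (msum m S F) v) \<ge> 0"
    unfolding q by (auto simp: sum_nonneg)
qed

lemma Fm_mono:
  assumes fin: "finite S" and a: "\<forall>u\<in>S. a u \<in> carrier_vec m"
    and c: "\<forall>u\<in>S. 0 \<le> c u \<and> c u \<le> c' u"
  shows "Re (det (Fm m S c a)) \<ge> 1 \<and> Re (det (Fm m S c a)) \<le> Re (det (Fm m S c' a))"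
proof -
  define Sm where "Sm = msum m S (\<lambda>u. complex_of_real (c u) \<cdot>\<^sub>m Em m (a u))"
  define Dm where "Dm = msum m S (\<lambda>u. complex_of_real (c' u - c u) \<cdot>\<^sub>m Em m (a u))"
  have nS: "nn m Sm" unfolding Sm_def using fin a c by (intro nn_msum nn_E ballI) auto
  have nD: "nn m Dm" unfolding Dm_def using fin a c by (intro nn_msum nn_E ballI) auto
  have Sc: "Sm \<in> carrier_mat m m" unfolding Sm_def msum_def by simp
  have e1: "Fm m S c a = 1\<^sub>m m + Sm" unfolding Fm_def Sm_def[symmetric]
    using Sc by (rule comm_add_mat) simp
  have e2: "Fm m S c' a = 1\<^sub>m m + Sm + Dm" unfolding Fm_def Sm_def Dm_def
  proof (rule eq_matI)
    fix i j assume ij: "i < dim_row (1\<^sub>m m + msum m S (\<lambda>u. complex_of_real (c u) \<cdot>\<^sub>m Em m (a u)) +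
            msum m S (\<lambda>u. complex_of_real (c' u - c u) \<cdot>\<^sub>m Em m (a u)))"
       "j < dim_col (1\<^sub>m m + msum m S (\<lambda>u. complex_of_real (c u) \<cdot>\<^sub>m Em m (a u)) +
            msum m S (\<lambda>u. complex_of_real (c' u - c u) \<cdot>\<^sub>m Em m (a u)))"
    hence ij: "i < m" "j < m" by (auto simp: msum_def)
    have "(\<Sum>u\<in>S. complex_of_real (c' u) * (a u $ i * cnj (a u $ j))) =
      (\<Sum>u\<in>S. complex_of_real (c u) * (a u $ i * cnj (a u $ j))) + (\<Sum>u\<in>S. complex_of_real (c' u - c u) * (a u $ i * cnj (a u $ j)))"
      unfolding sum.distrib[symmetric] by (intro sum.cong refl) (simp add: algebra_simps)
    thus "(msum m S (\<lambda>u. complex_of_real (c' u) \<cdot>\<^sub>m Em m (a u)) + 1\<^sub>m m) $$ (i, j) =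
         (1\<^sub>m m + msum m S (\<lambda>u. complex_of_real (c u) \<cdot>\<^sub>m Em m (a u)) +
            msum m S (\<lambda>u. complex_of_real (c' u - c u) \<cdot>\<^sub>m Em m (a u))) $$ (i, j)"
      using ij by (simp add: msum_def Em_def)
  qed (auto simp: msum_def)
  show ?thesis unfolding e1 e2 using det_nn[OF nS] det_mono[OF nS nD] by simp
qed

lemma mult_idx:
  assumes "A \<in> carrier_mat p q" "B \<in> carrier_mat q r" "i < p" "j < r"
  shows "(A * B) $$ (i, j) = (\<Sum>k<q. A $$ (i, k) * B $$ (k, j))"
  using assms by (simp add: scalar_prod_def atLeast0LessThan)

lemma rank1:
  fixes x :: complex
  assumes a: "a \<in> carrier_vec m" and t: "t \<in> carrier_vec n" and Q: "Q \<in> carrier_mat n n"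
    and G: "G = Matrix.mat m n (\<lambda>(i, k). x * a $ i * cnj (t $ k))"
  shows "G * Q * mat_adjoint G = (x * cnj x * qf Q t) \<cdot>\<^sub>m Em m a"
proof -
  have Gc: "G \<in> carrier_mat m n" using G by simp
  have GQ: "G * Q \<in> carrier_mat m n" using Gc Q by simp
  have aG: "mat_adjoint G \<in> carrier_mat n m" using Gc by (intro carrier_matI) (simp_all only: adj_dims carrier_matD)
  have Ge: "G $$ (i, k) = x * a $ i * cnj (t $ k)" if "i < m" "k < n" for i k
    using G that by simp
  have ent: "(G * Q * mat_adjoint G) $$ (i, j) = ((x * cnj x * qf Q t) \<cdot>\<^sub>m Em m a) $$ (i, j)"
    if ij: "i < m" "j < m" for i j
  proof -
    have "(G * Q * mat_adjoint G) $$ (i, j) = (\<Sum>l<n. (G * Q) $$ (i, l) * mat_adjoint G $$ (l, j))"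
      by (rule mult_idx[OF GQ aG ij])
    also have "\<dots> = (\<Sum>l<n. (\<Sum>k<n. G $$ (i, k) * Q $$ (k, l)) * cnj (G $$ (j, l)))"
    proof (rule sum.cong[OF refl])
      fix l assume l: "l \<in> {..<n}"
      have "(G * Q) $$ (i, l) = (\<Sum>k<n. G $$ (i, k) * Q $$ (k, l))"
        using mult_idx[OF Gc Q] ij l by simp
      moreover have "mat_adjoint G $$ (l, j) = cnj (G $$ (j, l))" using Gc ij l by simp
      ultimately show "(G * Q) $$ (i, l) * mat_adjoint G $$ (l, j) = (\<Sum>k<n. G $$ (i, k) * Q $$ (k, l)) * cnj (G $$ (j, l))"
        by simp
    qed
    also have "\<dots> = (\<Sum>l<n. \<Sum>k<n. (x * cnj x * (a $ i * cnj (a $ j))) * (cnj (t $ k) * Q $$ (k, l) * t $ l))"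
    proof (rule sum.cong[OF refl])
      fix l assume l: "l \<in> {..<n}"
      have "(\<Sum>k<n. G $$ (i, k) * Q $$ (k, l)) * cnj (G $$ (j, l)) = (\<Sum>k<n. G $$ (i, k) * Q $$ (k, l) * cnj (G $$ (j, l)))"
        by (simp add: sum_distrib_right)
      also have "\<dots> = (\<Sum>k<n. (x * cnj x * (a $ i * cnj (a $ j))) * (cnj (t $ k) * Q $$ (k, l) * t $ l))"
        by (rule sum.cong[OF refl]) (use ij l in \<open>simp add: Ge mult_ac\<close>)
      finally show "(\<Sum>k<n. G $$ (i, k) * Q $$ (k, l)) * cnj (G $$ (j, l)) = (\<Sum>k<n. (x * cnj x * (a $ i * cnj (a $ j))) * (cnj (t $ k) * Q $$ (k, l) * t $ l))" .
    qed
    also have "\<dots> = (x * cnj x * (a $ i * cnj (a $ j))) * (\<Sum>l<n. \<Sum>k<n. cnj (t $ k) * Q $$ (k, l) * t $ l)"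
      by (simp add: sum_distrib_left)
    also have "(\<Sum>l<n. \<Sum>k<n. cnj (t $ k) * Q $$ (k, l) * t $ l) = (\<Sum>k<n. \<Sum>l<n. cnj (t $ k) * Q $$ (k, l) * t $ l)"
      by (rule sum.swap)
    also have "(x * cnj x * (a $ i * cnj (a $ j))) * (\<Sum>k<n. \<Sum>l<n. cnj (t $ k) * Q $$ (k, l) * t $ l)
       = ((x * cnj x * qf Q t) \<cdot>\<^sub>m Em m a) $$ (i, j)"
      unfolding qf_sum[OF Q t] using ij by (simp add: Em_def mult_ac)
    finally show ?thesis .
  qed
  show ?thesis
    by (rule eq_matI) (use Gc aG ent in \<open>auto simp: Em_def\<close>)
qed

lemma z01: "(0::nat) < 1" by simp

lemma one_sum: "(\<Sum>k<(1::nat). f k) = f 0"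
  by simp

lemma AR_c: "AR lam d M L b \<in> carrier_mat M L" unfolding AR_def by simp
lemma AT_c: "AT lam N L th w \<in> carrier_mat N L" unfolding AT_def by simp
lemma Gam_c: "Gam L g \<in> carrier_mat L L" unfolding Gam_def by simp
lemma adj_c: "A \<in> carrier_mat p q \<Longrightarrow> mat_adjoint A \<in> carrier_mat q p"
  by (intro carrier_matI) (simp_all only: adj_dims carrier_matD)

lemma AR_idx: "i < M \<Longrightarrow> AR lam d M 1 b $$ (i, 0) = aR lam d M (b 1) $ i"
  unfolding AR_def by simp
lemma AT_idx: "k < N \<Longrightarrow> AT lam N 1 th w $$ (k, 0) = aT lam N w (th 1) $ k"
  unfolding AT_def by simp
lemma Gam_idx: "Gam 1 g $$ (0, 0) = g 1"
  unfolding Gam_def by simp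

lemma chanG_form:
  "chanG lam d M N 1 g b th w = Matrix.mat M N (\<lambda>(i, k). (complex_of_real (sqrt (real (M * N))) * g 1)
     * aR lam d M (b 1) $ i * cnj (aT lam N w (th 1) $ k))"
proof -
  have c1: "AR lam d M 1 b * Gam 1 g \<in> carrier_mat M 1" using AR_c Gam_c by (rule mult_carrier_mat)
  have c2: "mat_adjoint (AT lam N 1 th w) \<in> carrier_mat 1 N" using AT_c by (rule adj_c)
  have c3: "AR lam d M 1 b * Gam 1 g * mat_adjoint (AT lam N 1 th w) \<in> carrier_mat M N"
    using c1 c2 by (rule mult_carrier_mat)
  have e: "(AR lam d M 1 b * Gam 1 g * mat_adjoint (AT lam N 1 th w)) $$ (i, k) =
      aR lam d M (b 1) $ i * g 1 * cnj (aT lam N w (th 1) $ k)" if "i < M" "k < N" for i k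
  proof -
    have "(AR lam d M 1 b * Gam 1 g * mat_adjoint (AT lam N 1 th w)) $$ (i, k)
       = (AR lam d M 1 b * Gam 1 g) $$ (i, 0) * mat_adjoint (AT lam N 1 th w) $$ (0, k)"
      using mult_idx[OF c1 c2 that] by (simp only: one_sum)
    also have "(AR lam d M 1 b * Gam 1 g) $$ (i, 0) = AR lam d M 1 b $$ (i, 0) * Gam 1 g $$ (0, 0)"
      using mult_idx[OF AR_c[of lam d M 1 b] Gam_c[of 1 g] that(1) z01] by (simp only: one_sum)
    also have "mat_adjoint (AT lam N 1 th w) $$ (0, k) = cnj (AT lam N 1 th w $$ (k, 0))"
      using that AT_c[of lam N 1 th w] by (simp add: carrier_matD)
    finally show ?thesis by (simp only: AR_idx[OF that(1)] AT_idx[OF that(2)] Gam_idx)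
  qed
  have d3: "dim_row (AR lam d M 1 b * Gam 1 g * mat_adjoint (AT lam N 1 th w)) = M"
    "dim_col (AR lam d M 1 b * Gam 1 g * mat_adjoint (AT lam N 1 th w)) = N"
    using carrier_matD[OF c3] by (simp_all only:)
  show ?thesis unfolding chanG_def
    by (rule eq_matI) (use d3 e in \<open>auto simp: ac_simps\<close>)
qed

lemma cub_form:
  assumes Qt: "Qt \<in> carrier_mat 1 1"
  shows "AR lam d M 1 b * Gam 1 g * Qt * mat_adjoint (Gam 1 g) * mat_adjoint (AR lam d M 1 b)
    = (g 1 * cnj (g 1) * Qt $$ (0, 0)) \<cdot>\<^sub>m Em M (aR lam d M (b 1))"
proof -
  define G where "G = AR lam d M 1 b * Gam 1 g"
  have Gc: "G \<in> carrier_mat M 1" unfolding G_def using AR_c Gam_c by (rule mult_carrier_mat)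
  have Ge: "G $$ (i, 0) = aR lam d M (b 1) $ i * g 1" if "i < M" for i
    unfolding G_def using mult_idx[OF AR_c[of lam d M 1 b] Gam_c[of 1 g] that z01] that by (simp only: one_sum AR_idx[OF that] Gam_idx)
  have GG: "G = Matrix.mat M 1 (\<lambda>(i, k). g 1 * aR lam d M (b 1) $ i * cnj (vec 1 (\<lambda>_. 1) $ k))"
    by (rule eq_matI) (use Gc Ge in \<open>auto simp: carrier_matD mult.commute\<close>)
  have adjeq: "mat_adjoint (Gam 1 g) * mat_adjoint (AR lam d M 1 b) = mat_adjoint G"
  proof (rule eq_matI)
    have c: "mat_adjoint (Gam 1 g) * mat_adjoint (AR lam d M 1 b) \<in> carrier_mat 1 M"
      using adj_c[OF Gam_c] adj_c[OF AR_c] by (rule mult_carrier_mat)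
    have c2: "mat_adjoint G \<in> carrier_mat 1 M" using adj_c[OF Gc] .
    show "dim_row (mat_adjoint (Gam 1 g) * mat_adjoint (AR lam d M 1 b)) = dim_row (mat_adjoint G)"
      using carrier_matD[OF c] carrier_matD[OF c2] by (simp only:)
    show "dim_col (mat_adjoint (Gam 1 g) * mat_adjoint (AR lam d M 1 b)) = dim_col (mat_adjoint G)"
      using carrier_matD[OF c] carrier_matD[OF c2] by (simp only:)
    fix i j assume "i < dim_row (mat_adjoint G)" "j < dim_col (mat_adjoint G)"
    hence ij: "i = 0" "j < M" using c2 by (auto simp: carrier_matD)
    have "(mat_adjoint (Gam 1 g) * mat_adjoint (AR lam d M 1 b)) $$ (i, j)
       = mat_adjoint (Gam 1 g) $$ (0, 0) * mat_adjoint (AR lam d M 1 b) $$ (0, j)"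
      using mult_idx[OF adj_c[OF Gam_c[of 1 g]] adj_c[OF AR_c[of lam d M 1 b]] _ ij(2)] ij by (simp only: one_sum)
    also have "\<dots> = cnj (g 1) * cnj (aR lam d M (b 1) $ j)"
      using ij Gam_c[of 1 g] AR_c[of lam d M 1 b] adj_index[of 0 "Gam 1 g" 0] adj_index[of 0 "AR lam d M 1 b" j]
      by (simp only: carrier_matD AR_idx[OF ij(2)] Gam_idx)
    also have "\<dots> = mat_adjoint G $$ (i, j)"
      using ij Gc Ge[of j] by (simp add: carrier_matD)
    finally show "(mat_adjoint (Gam 1 g) * mat_adjoint (AR lam d M 1 b)) $$ (i, j) = mat_adjoint G $$ (i, j)" .
  qed
  have "AR lam d M 1 b * Gam 1 g * Qt * mat_adjoint (Gam 1 g) * mat_adjoint (AR lam d M 1 b)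
      = G * Qt * (mat_adjoint (Gam 1 g) * mat_adjoint (AR lam d M 1 b))"
    unfolding G_def using Gc[unfolded G_def] Qt adj_c[OF Gam_c] adj_c[OF AR_c]
    by (metis assoc_mult_mat mult_carrier_mat)
  also have "\<dots> = G * Qt * mat_adjoint G" unfolding adjeq ..
  also have "\<dots> = (g 1 * cnj (g 1) * qf Qt (vec 1 (\<lambda>_. 1))) \<cdot>\<^sub>m Em M (aR lam d M (b 1))"
    by (rule rank1[OF _ _ Qt GG]) (auto simp: aR_def)
  also have "qf Qt (vec 1 (\<lambda>_. 1)) = Qt $$ (0, 0)"
    using qf_sum[OF Qt, of "vec 1 (\<lambda>_. 1)"] by simp
  finally show ?thesis .
qed

lemma smult_smult_m: "a \<cdot>\<^sub>m (b \<cdot>\<^sub>m (A :: complex mat)) = (a * b) \<cdot>\<^sub>m A"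
  by (rule eq_matI) auto

lemma msum_cong: "(\<And>u. u \<in> S \<Longrightarrow> F u = F' u) \<Longrightarrow> msum m S F = msum m S F'"
  unfolding msum_def by (intro arg_cong[of _ _ "Matrix.mat m m"] ext) (auto split: prod.split intro!: sum.cong)

lemma qf_E:
  assumes a: "a \<in> carrier_vec m" and v: "v \<in> carrier_vec m"
  shows "qf (complex_of_real c \<cdot>\<^sub>m Em m a) v = complex_of_real (c * (cmod (\<Sum>i<m. cnj (v $ i) * a $ i))\<^sup>2)"
proof -
  define z where "z = (\<Sum>i<m. cnj (v $ i) * a $ i)"
  have "qf (complex_of_real c \<cdot>\<^sub>m Em m a) v = (\<Sum>i<m. \<Sum>j<m. cnj (v $ i) * (complex_of_real c * (a $ i * cnj (a $ j))) * v $ j)"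
    by (subst qf_sum[of _ m], unfold Em_def, simp, rule v, intro sum.cong refl, simp)
  also have "\<dots> = complex_of_real c * (z * cnj z)"
    unfolding z_def by (simp add: sum_distrib_left sum_distrib_right mult_ac, rule sum.swap)
  also have "\<dots> = complex_of_real (c * (cmod z)\<^sup>2)"
    unfolding of_real_mult complex_norm_square ..
  finally show ?thesis unfolding z_def .
qed

lemma aT_c: "aT lam N w th \<in> carrier_vec N" unfolding aT_def by simp
lemma aR_c: "aR lam d M b \<in> carrier_vec M" unfolding aR_def by simp

lemma aT_norm:
  assumes N: "N \<ge> 1"
  shows "(\<Sum>k<N. (cmod (aT lam N w th $ k))\<^sup>2) = 1"
proof -
  have "(\<Sum>k<N. (cmod (aT lam N w th $ k))\<^sup>2) = (\<Sum>k<N. 1 / real N)"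
  proof (rule sum.cong[OF refl])
    fix k assume k: "k \<in> {..<N}"
    have "cmod (aT lam N w th $ k) = 1 / sqrt (real N)"
      using k unfolding aT_def by (simp add: norm_mult norm_divide)
    thus "(cmod (aT lam N w th $ k))\<^sup>2 = 1 / real N" by (simp add: power_divide)
  qed
  also have "\<dots> = 1" using N by simp
  finally show ?thesis .
qed

lemma xcx: "(complex_of_real (sqrt (real K)) * g) * cnj (complex_of_real (sqrt (real K)) * g)
   = complex_of_real (real K * (cmod g)\<^sup>2)"
proof -
  have s: "complex_of_real (sqrt (real K)) * complex_of_real (sqrt (real K)) = complex_of_real (real K)"
    by (simp flip: of_real_mult)
  have g: "g * cnj g = complex_of_real ((cmod g)\<^sup>2)" by (rule complex_norm_square[symmetric])
  have "(complex_of_real (sqrt (real K)) * g) * cnj (complex_of_real (sqrt (real K)) * g)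
     = (complex_of_real (sqrt (real K)) * complex_of_real (sqrt (real K))) * (g * cnj g)"
    by (simp only: complex_cnj_mult complex_cnj_complex_of_real mult_ac)
  also have "\<dots> = complex_of_real (real K * (cmod g)\<^sup>2)" unfolding s g of_real_mult ..
  finally show ?thesis .
qed

lemma chan_term:
  assumes Q: "Q \<in> carrier_mat N N"
  shows "chanG lam d M N 1 g b th w * Q * mat_adjoint (chanG lam d M N 1 g b th w)
    = (complex_of_real (real (M * N) * (cmod (g 1))\<^sup>2) * qf Q (aT lam N w (th 1))) \<cdot>\<^sub>m Em M (aR lam d M (b 1))"
proof -
  have "chanG lam d M N 1 g b th w * Q * mat_adjoint (chanG lam d M N 1 g b th w)
    = ((complex_of_real (sqrt (real (M * N))) * g 1) * cnj (complex_of_real (sqrt (real (M * N))) * g 1)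
        * qf Q (aT lam N w (th 1))) \<cdot>\<^sub>m Em M (aR lam d M (b 1))"
    by (rule rank1[OF aR_c aT_c Q chanG_form])
  also have "(complex_of_real (sqrt (real (M * N))) * g 1) * cnj (complex_of_real (sqrt (real (M * N))) * g 1)
     = complex_of_real (real (M * N) * (cmod (g 1))\<^sup>2)" by (rule xcx)
  finally show ?thesis .
qed

lemma Fm_logdet_le:
  assumes fin: "finite S" and a: "\<forall>u\<in>S. a u \<in> carrier_vec m"
    and c: "\<forall>u\<in>S. 0 \<le> c u \<and> c u \<le> c' u"
  shows "logdet (Fm m S c a) \<le> logdet (Fm m S c' a)"
proof -
  have h: "Re (det (Fm m S c a)) \<ge> 1" "Re (det (Fm m S c a)) \<le> Re (det (Fm m S c' a))"
    using Fm_mono[OF fin a c] by auto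
  thus ?thesis unfolding logdet_def by (subst ln_le_cancel_iff) auto
qed

lemma star_term:
  assumes Q: "psd N Q" and tr: "Re (mtrace Q) \<le> P" and N: "N \<ge> 1"
  shows "\<exists>c. 0 \<le> c \<and> c \<le> real (M * N) * P * (cmod (g 1))\<^sup>2 \<and>
    chanG lam d M N 1 g b th w * Q * mat_adjoint (chanG lam d M N 1 g b th w)
      = complex_of_real c \<cdot>\<^sub>m Em M (aR lam d M (b 1))"
proof -
  have Qc: "Q \<in> carrier_mat N N" and h: "mat_adjoint Q = Q" using Q unfolding psd_def by auto
  define t where "t = aT lam N w (th 1)"
  have tc: "t \<in> carrier_vec N" unfolding t_def by (rule aT_c)
  have ts: "(\<Sum>k<N. (cmod (t $ k))\<^sup>2) = 1" unfolding t_def by (rule aT_norm[OF N])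
  have im: "Im (qf Q t) = 0" by (rule qf_herm[OF Qc h tc])
  have re0: "Re (qf Q t) \<ge> 0" using Q tc unfolding psd_def qf_def by auto
  have re1: "Re (qf Q t) \<le> P" using qf_le_trace[OF Q tc ts] tr by linarith
  have qe: "qf Q t = complex_of_real (Re (qf Q t))" using im by (simp add: complex_eq_iff)
  define c where "c = real (M * N) * (cmod (g 1))\<^sup>2 * Re (qf Q t)"
  have "c \<ge> 0" unfolding c_def using re0 by simp
  moreover have "c \<le> real (M * N) * P * (cmod (g 1))\<^sup>2"
  proof -
    have "real (M * N) * (cmod (g 1))\<^sup>2 * Re (qf Q t) \<le> real (M * N) * (cmod (g 1))\<^sup>2 * P"
      using re1 by (intro mult_left_mono) auto
    thus ?thesis unfolding c_def by (simp add: mult_ac)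
  qed
  moreover have "chanG lam d M N 1 g b th w * Q * mat_adjoint (chanG lam d M N 1 g b th w)
      = complex_of_real c \<cdot>\<^sub>m Em M (aR lam d M (b 1))"
    unfolding chan_term[OF Qc] t_def[symmetric] c_def
    by (subst qe) (simp only: of_real_mult)
  ultimately show ?thesis by blast
qed

lemma star_attain:
  fixes lam d :: real and w th :: "nat \<Rightarrow> real" and g :: "nat \<Rightarrow> complex" and b :: "nat \<Rightarrow> real"
  assumes N: "N \<ge> 1" and P: "P \<ge> 0"
  defines "Q0 \<equiv> complex_of_real P \<cdot>\<^sub>m Em N (aT lam N w (th 1))"
  shows "psd N Q0 \<and> Re (mtrace Q0) \<le> P \<and>
    chanG lam d M N 1 g b th w * Q0 * mat_adjoint (chanG lam d M N 1 g b th w)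
      = complex_of_real (real (M * N) * P * (cmod (g 1))\<^sup>2) \<cdot>\<^sub>m Em M (aR lam d M (b 1))"
proof -
  define t where "t = aT lam N w (th 1)"
  have tc: "t \<in> carrier_vec N" unfolding t_def by (rule aT_c)
  have ts: "(\<Sum>k<N. (cmod (t $ k))\<^sup>2) = 1" unfolding t_def by (rule aT_norm[OF N])
  have us: "(\<Sum>k<N. t $ k * cnj (t $ k)) = 1" by (rule unit_sum[OF tc ts])
  have Qc: "Q0 \<in> carrier_mat N N" unfolding Q0_def Em_def by simp
  have nn0: "nn N Q0" unfolding Q0_def t_def[symmetric] by (rule nn_E[OF tc P])
  have adj: "mat_adjoint Q0 = Q0"
  proof (rule eq_matI)
    fix i j assume "i < dim_row Q0" "j < dim_col Q0"
    hence ij: "i < N" "j < N" using Qc by auto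
    show "mat_adjoint Q0 $$ (i, j) = Q0 $$ (i, j)"
      using ij Qc unfolding Q0_def t_def[symmetric] by (simp add: Em_def)
  qed (use Qc in auto)
  have psd0: "psd N Q0" unfolding psd_def using Qc adj nn0 unfolding nn_def qf_def by auto
  have "mtrace Q0 = (\<Sum>k<N. complex_of_real P * (t $ k * cnj (t $ k)))"
    unfolding mtrace_def Q0_def t_def[symmetric] by (simp add: Em_def)
  also have "\<dots> = complex_of_real P" unfolding sum_distrib_left[symmetric] us by simp
  finally have tr: "Re (mtrace Q0) \<le> P" by simp
  have "qf Q0 t = complex_of_real (P * (cmod (\<Sum>i<N. cnj (t $ i) * t $ i))\<^sup>2)"
    unfolding Q0_def t_def[symmetric] by (rule qf_E[OF tc tc])
  also have "(\<Sum>i<N. cnj (t $ i) * t $ i) = 1" using us by (simp add: mult.commute)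
  finally have q: "qf Q0 t = complex_of_real P" by simp
  have "chanG lam d M N 1 g b th w * Q0 * mat_adjoint (chanG lam d M N 1 g b th w)
      = complex_of_real (real (M * N) * P * (cmod (g 1))\<^sup>2) \<cdot>\<^sub>m Em M (aR lam d M (b 1))"
    unfolding chan_term[OF Qc] t_def[symmetric] q by (simp add: mult_ac)
  with psd0 tr show ?thesis by blast
qed

lemma cub_eq:
  assumes Qt: "Qt \<in> carrier_mat 1 1" and q: "Im (Qt $$ (0, 0)) = 0"
  shows "complex_of_real (real (M * N)) \<cdot>\<^sub>m
      (AR lam d M 1 b * Gam 1 g * Qt * mat_adjoint (Gam 1 g) * mat_adjoint (AR lam d M 1 b))
    = complex_of_real (real (M * N) * (cmod (g 1))\<^sup>2 * Re (Qt $$ (0, 0))) \<cdot>\<^sub>m Em M (aR lam d M (b 1))"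
proof -
  have qe: "Qt $$ (0, 0) = complex_of_real (Re (Qt $$ (0, 0)))" using q by (simp add: complex_eq_iff)
  have gg: "g 1 * cnj (g 1) = complex_of_real ((cmod (g 1))\<^sup>2)" by (rule complex_norm_square[symmetric])
  show ?thesis unfolding cub_form[OF Qt] smult_smult_m
    by (subst qe, unfold gg) (simp only: of_real_mult mult_ac)
qed

lemma cub_term:
  assumes Q: "psd 1 Qt" and tr: "Re (mtrace Qt) \<le> P"
  shows "\<exists>c. 0 \<le> c \<and> c \<le> real (M * N) * P * (cmod (g 1))\<^sup>2 \<and>
    complex_of_real (real (M * N)) \<cdot>\<^sub>m
      (AR lam d M 1 b * Gam 1 g * Qt * mat_adjoint (Gam 1 g) * mat_adjoint (AR lam d M 1 b))
      = complex_of_real c \<cdot>\<^sub>m Em M (aR lam d M (b 1))"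
proof -
  have Qc: "Qt \<in> carrier_mat 1 1" and h: "mat_adjoint Qt = Qt" using Q unfolding psd_def by auto
  define v :: "complex vec" where "v = vec 1 (\<lambda>_. 1)"
  have vc: "v \<in> carrier_vec 1" unfolding v_def by simp
  have qv: "qf Qt v = Qt $$ (0, 0)" using qf_sum[OF Qc vc] unfolding v_def by simp
  have im: "Im (Qt $$ (0, 0)) = 0" using qf_herm[OF Qc h vc] qv by simp
  have re0: "Re (Qt $$ (0, 0)) \<ge> 0" using Q vc qv unfolding psd_def qf_def by auto
  have "mtrace Qt = Qt $$ (0, 0)" unfolding mtrace_def using Qc by simp
  hence re1: "Re (Qt $$ (0, 0)) \<le> P" using tr by simp
  define c where "c = real (M * N) * (cmod (g 1))\<^sup>2 * Re (Qt $$ (0, 0))"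
  have "c \<ge> 0" unfolding c_def using re0 by simp
  moreover have "c \<le> real (M * N) * P * (cmod (g 1))\<^sup>2"
  proof -
    have "real (M * N) * (cmod (g 1))\<^sup>2 * Re (Qt $$ (0, 0)) \<le> real (M * N) * (cmod (g 1))\<^sup>2 * P"
      using re1 by (intro mult_left_mono) auto
    thus ?thesis unfolding c_def by (simp add: mult_ac)
  qed
  moreover have "complex_of_real (real (M * N)) \<cdot>\<^sub>m
      (AR lam d M 1 b * Gam 1 g * Qt * mat_adjoint (Gam 1 g) * mat_adjoint (AR lam d M 1 b))
      = complex_of_real c \<cdot>\<^sub>m Em M (aR lam d M (b 1))"
    unfolding c_def by (rule cub_eq[OF Qc im])
  ultimately show ?thesis by blast
qed

lemma cub_attain:
  assumes P: "P \<ge> 0"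
  shows "psd 1 (Matrix.mat 1 1 (\<lambda>_. complex_of_real P)) \<and> Re (mtrace (Matrix.mat 1 1 (\<lambda>_. complex_of_real P))) \<le> P \<and>
    complex_of_real (real (M * N)) \<cdot>\<^sub>m
      (AR lam d M 1 b * Gam 1 g * Matrix.mat 1 1 (\<lambda>_. complex_of_real P) * mat_adjoint (Gam 1 g) * mat_adjoint (AR lam d M 1 b))
      = complex_of_real (real (M * N) * P * (cmod (g 1))\<^sup>2) \<cdot>\<^sub>m Em M (aR lam d M (b 1))"
proof -
  define Qt :: "complex mat" where "Qt = Matrix.mat 1 1 (\<lambda>_. complex_of_real P)"
  have Qc: "Qt \<in> carrier_mat 1 1" unfolding Qt_def by simp
  have adj: "mat_adjoint Qt = Qt"
  proof (rule eq_matI)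
    fix i j assume "i < dim_row Qt" "j < dim_col Qt"
    hence ij: "i = 0" "j = 0" using Qc by auto
    show "mat_adjoint Qt $$ (i, j) = Qt $$ (i, j)" using ij Qc unfolding Qt_def by simp
  qed (use Qc in auto)
  have qv: "Re (conjugate v \<bullet> (Qt *\<^sub>v v)) \<ge> 0" if v: "v \<in> carrier_vec 1" for v
  proof -
    have "conjugate v \<bullet> (Qt *\<^sub>v v) = qf Qt v" unfolding qf_def ..
    also have "\<dots> = cnj (v $ 0) * complex_of_real P * v $ 0" using qf_sum[OF Qc v] unfolding Qt_def by simp
    also have "\<dots> = complex_of_real P * (v $ 0 * cnj (v $ 0))" by (simp only: mult_ac)
    also have "\<dots> = complex_of_real (P * (cmod (v $ 0))\<^sup>2)"
      unfolding of_real_mult complex_norm_square ..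
    finally show ?thesis using P by simp
  qed
  have psd0: "psd 1 Qt" unfolding psd_def using Qc adj qv by auto
  have "mtrace Qt = complex_of_real P" unfolding mtrace_def Qt_def by simp
  hence tr: "Re (mtrace Qt) \<le> P" by simp
  have "complex_of_real (real (M * N)) \<cdot>\<^sub>m
      (AR lam d M 1 b * Gam 1 g * Qt * mat_adjoint (Gam 1 g) * mat_adjoint (AR lam d M 1 b))
      = complex_of_real (real (M * N) * (cmod (g 1))\<^sup>2 * Re (Qt $$ (0, 0))) \<cdot>\<^sub>m Em M (aR lam d M (b 1))"
    by (rule cub_eq[OF Qc]) (simp add: Qt_def)
  also have "real (M * N) * (cmod (g 1))\<^sup>2 * Re (Qt $$ (0, 0)) = real (M * N) * P * (cmod (g 1))\<^sup>2"
    unfolding Qt_def by simp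
  finally show ?thesis using psd0 tr unfolding Qt_def by blast
qed

theorem lemma2:
  fixes lam :: real and U M :: nat
    and N L :: "nat \<Rightarrow> nat" and W P :: "nat \<Rightarrow> real"
    and gamma :: "nat \<Rightarrow> nat \<Rightarrow> complex"
    and beta theta :: "nat \<Rightarrow> nat \<Rightarrow> real"
  assumes lam_pos: "lam > 0"
    and M_pos: "M \<ge> 1"
    and N_pos: "\<forall>u\<in>{1..U}. N u \<ge> 1"
    and W_pos: "\<forall>u\<in>{1..U}. W u > 0"
    and P_pos: "\<forall>u\<in>{1..U}. P u > 0"
    and L_one: "\<forall>u\<in>{1..U}. L u = 1"
    and beta_rng: "\<forall>u\<in>{1..U}. \<forall>l\<in>{1..L u}. 0 \<le> beta u l \<and> beta u l \<le> pi"
    and theta_rng: "\<forall>u\<in>{1..U}. \<forall>l\<in>{1..L u}. 0 \<le> theta u l \<and> theta u l \<le> pi"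
  defines "d \<equiv> lam / 2"
  defines "Cstar \<equiv> Sup {logdet (msum M {1..U}
              (\<lambda>u. chanG lam d M (N u) (L u) (gamma u) (beta u) (theta u) (w u) * Q u *
                   mat_adjoint (chanG lam d M (N u) (L u) (gamma u) (beta u) (theta u) (w u)))
              + 1\<^sub>m M) |
          (Q :: nat \<Rightarrow> complex mat) (w :: nat \<Rightarrow> nat \<Rightarrow> real).
          \<forall>u\<in>{1..U}. psd (N u) (Q u) \<and> Re (mtrace (Q u)) \<le> P u
            \<and> (\<forall>n\<in>{1..N u}. 0 \<le> w u n \<and> w u n \<le> W u)
            \<and> (\<forall>n\<in>{1..N u}. \<forall>n'\<in>{1..N u}. n \<noteq> n' \<longrightarrow> w u n \<noteq> w u n')}"
  defines "Cub \<equiv> Sup {logdet (msum M {1..U}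
              (\<lambda>u. complex_of_real (real (M * N u)) \<cdot>\<^sub>m
                   (AR lam d M (L u) (beta u) * Gam (L u) (gamma u) * Qt u *
                    mat_adjoint (Gam (L u) (gamma u)) * mat_adjoint (AR lam d M (L u) (beta u))))
              + 1\<^sub>m M) |
          (Qt :: nat \<Rightarrow> complex mat).
          \<forall>u\<in>{1..U}. psd (L u) (Qt u) \<and> Re (mtrace (Qt u)) \<le> real (L u) * P u}"
  shows "Cstar = Cub \<and>
         Cub = logdet (msum M {1..U}
              (\<lambda>u. complex_of_real (real (M * N u) * P u * (cmod (gamma u 1))\<^sup>2) \<cdot>\<^sub>m
                   (Matrix.mat M M (\<lambda>(i, j). aR lam d M (beta u 1) $ i *
                                     cnj (aR lam d M (beta u 1) $ j))))
              + 1\<^sub>m M)"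
proof -
  define a where "a = (\<lambda>u. aR lam d M (beta u 1))"
  define cmax where "cmax = (\<lambda>u. real (M * N u) * P u * (cmod (gamma u 1))\<^sup>2)"
  define V where "V = logdet (Fm M {1..U} cmax a)"
  have fin: "finite {1..U}" by simp
  have ac: "\<forall>u\<in>{1..U}. a u \<in> carrier_vec M" unfolding a_def using aR_c by auto
  have rhs: "logdet (msum M {1..U}
              (\<lambda>u. complex_of_real (real (M * N u) * P u * (cmod (gamma u 1))\<^sup>2) \<cdot>\<^sub>m
                   (Matrix.mat M M (\<lambda>(i, j). aR lam d M (beta u 1) $ i *
                                     cnj (aR lam d M (beta u 1) $ j))))
              + 1\<^sub>m M) = V"
    unfolding V_def Fm_def Em_def a_def cmax_def ..
  define StarSet where "StarSet = {logdet (msum M {1..U}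
              (\<lambda>u. chanG lam d M (N u) (L u) (gamma u) (beta u) (theta u) (w u) * Q u *
                   mat_adjoint (chanG lam d M (N u) (L u) (gamma u) (beta u) (theta u) (w u)))
              + 1\<^sub>m M) |
          (Q :: nat \<Rightarrow> complex mat) (w :: nat \<Rightarrow> nat \<Rightarrow> real).
          \<forall>u\<in>{1..U}. psd (N u) (Q u) \<and> Re (mtrace (Q u)) \<le> P u
            \<and> (\<forall>n\<in>{1..N u}. 0 \<le> w u n \<and> w u n \<le> W u)
            \<and> (\<forall>n\<in>{1..N u}. \<forall>n'\<in>{1..N u}. n \<noteq> n' \<longrightarrow> w u n \<noteq> w u n')}"
  define CubSet where "CubSet = {logdet (msum M {1..U}
              (\<lambda>u. complex_of_real (real (M * N u)) \<cdot>\<^sub>m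
                   (AR lam d M (L u) (beta u) * Gam (L u) (gamma u) * Qt u *
                    mat_adjoint (Gam (L u) (gamma u)) * mat_adjoint (AR lam d M (L u) (beta u))))
              + 1\<^sub>m M) |
          (Qt :: nat \<Rightarrow> complex mat).
          \<forall>u\<in>{1..U}. psd (L u) (Qt u) \<and> Re (mtrace (Qt u)) \<le> real (L u) * P u}"
  have CS: "Cstar = Sup StarSet" unfolding Cstar_def StarSet_def ..
  have CU: "Cub = Sup CubSet" unfolding Cub_def CubSet_def ..
  have "Sup StarSet = V"
  proof (rule cSup_eq_maximum)
    define w0 where "w0 = (\<lambda>u n. W u * real n / real (N u))"
    define Q0 where "Q0 = (\<lambda>u. complex_of_real (P u) \<cdot>\<^sub>m Em (N u) (aT lam (N u) (w0 u) (theta u 1)))"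
    have att: "psd (N u) (Q0 u) \<and> Re (mtrace (Q0 u)) \<le> P u \<and>
      chanG lam d M (N u) 1 (gamma u) (beta u) (theta u) (w0 u) * Q0 u * mat_adjoint (chanG lam d M (N u) 1 (gamma u) (beta u) (theta u) (w0 u))
      = complex_of_real (cmax u) \<cdot>\<^sub>m Em M (a u)" if u: "u \<in> {1..U}" for u
      unfolding Q0_def cmax_def a_def
      by (rule star_attain) (use N_pos[rule_format, OF u] P_pos[rule_format, OF u] in auto)
    have wok: "(\<forall>n\<in>{1..N u}. 0 \<le> w0 u n \<and> w0 u n \<le> W u)
            \<and> (\<forall>n\<in>{1..N u}. \<forall>n'\<in>{1..N u}. n \<noteq> n' \<longrightarrow> w0 u n \<noteq> w0 u n')" if u: "u \<in> {1..U}" for u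
    proof -
      have Wp: "W u > 0" and Np: "N u \<ge> 1" using W_pos N_pos u by auto
      have "0 \<le> w0 u n \<and> w0 u n \<le> W u" if n: "n \<in> {1..N u}" for n
      proof -
        have "real n \<le> real (N u)" using n by simp
        hence "W u * real n \<le> W u * real (N u)" using Wp by (intro mult_left_mono) auto
        thus ?thesis unfolding w0_def using Wp Np by (simp add: divide_le_eq)
      qed
      moreover have "w0 u n \<noteq> w0 u n'" if "n \<noteq> n'" for n n'
        unfolding w0_def using that Wp Np by (simp add: divide_right_mono)
      ultimately show ?thesis by blast
    qed
    have "logdet (msum M {1..U}
              (\<lambda>u. chanG lam d M (N u) (L u) (gamma u) (beta u) (theta u) (w0 u) * Q0 u *
                   mat_adjoint (chanG lam d M (N u) (L u) (gamma u) (beta u) (theta u) (w0 u)))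
              + 1\<^sub>m M) = V"
      unfolding V_def Fm_def
      by (rule arg_cong[where f = "\<lambda>X. logdet (X + 1\<^sub>m M)"], rule msum_cong)
         (use att L_one in simp)
    moreover have "\<forall>u\<in>{1..U}. psd (N u) (Q0 u) \<and> Re (mtrace (Q0 u)) \<le> P u
            \<and> (\<forall>n\<in>{1..N u}. 0 \<le> w0 u n \<and> w0 u n \<le> W u)
            \<and> (\<forall>n\<in>{1..N u}. \<forall>n'\<in>{1..N u}. n \<noteq> n' \<longrightarrow> w0 u n \<noteq> w0 u n')"
      using att wok by blast
    ultimately show "V \<in> StarSet" unfolding StarSet_def by blast
  next
    fix x assume "x \<in> StarSet"
    then obtain Q w where x: "x = logdet (msum M {1..U}
              (\<lambda>u. chanG lam d M (N u) (L u) (gamma u) (beta u) (theta u) (w u) * Q u *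
                   mat_adjoint (chanG lam d M (N u) (L u) (gamma u) (beta u) (theta u) (w u)))
              + 1\<^sub>m M)"
      and feas: "\<forall>u\<in>{1..U}. psd (N u) (Q u) \<and> Re (mtrace (Q u)) \<le> P u"
      unfolding StarSet_def by blast
    have "\<forall>u\<in>{1..U}. \<exists>c. 0 \<le> c \<and> c \<le> cmax u \<and>
      chanG lam d M (N u) (L u) (gamma u) (beta u) (theta u) (w u) * Q u *
                   mat_adjoint (chanG lam d M (N u) (L u) (gamma u) (beta u) (theta u) (w u))
      = complex_of_real c \<cdot>\<^sub>m Em M (a u)"
    proof
      fix u assume u: "u \<in> {1..U}"
      have Lu: "L u = 1" using L_one u by auto
      show "\<exists>c. 0 \<le> c \<and> c \<le> cmax u \<and>
      chanG lam d M (N u) (L u) (gamma u) (beta u) (theta u) (w u) * Q u *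
                   mat_adjoint (chanG lam d M (N u) (L u) (gamma u) (beta u) (theta u) (w u))
      = complex_of_real c \<cdot>\<^sub>m Em M (a u)"
        unfolding Lu cmax_def a_def
        by (rule star_term) (use feas[rule_format, OF u] N_pos[rule_format, OF u] in auto)
    qed
    then obtain c where c: "\<forall>u\<in>{1..U}. 0 \<le> c u \<and> c u \<le> cmax u \<and>
      chanG lam d M (N u) (L u) (gamma u) (beta u) (theta u) (w u) * Q u *
                   mat_adjoint (chanG lam d M (N u) (L u) (gamma u) (beta u) (theta u) (w u))
      = complex_of_real (c u) \<cdot>\<^sub>m Em M (a u)"
      by (metis (no_types, lifting) bchoice)
    have "x = logdet (Fm M {1..U} c a)"
      unfolding x Fm_def
      by (rule arg_cong[where f = "\<lambda>X. logdet (X + 1\<^sub>m M)"], rule msum_cong) (use c in simp)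
    also have "\<dots> \<le> V" unfolding V_def by (rule Fm_logdet_le[OF fin ac]) (use c in auto)
    finally show "x \<le> V" .
  qed
  moreover
  have "Sup CubSet = V"
  proof (rule cSup_eq_maximum)
    define Qt0 where "Qt0 = (\<lambda>u. Matrix.mat 1 1 (\<lambda>_. complex_of_real (P u)))"
    have att: "psd 1 (Qt0 u) \<and> Re (mtrace (Qt0 u)) \<le> P u \<and>
      complex_of_real (real (M * N u)) \<cdot>\<^sub>m
      (AR lam d M 1 (beta u) * Gam 1 (gamma u) * Qt0 u * mat_adjoint (Gam 1 (gamma u)) * mat_adjoint (AR lam d M 1 (beta u)))
      = complex_of_real (cmax u) \<cdot>\<^sub>m Em M (a u)" if u: "u \<in> {1..U}" for u
      unfolding Qt0_def cmax_def a_def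
      by (rule cub_attain) (use P_pos[rule_format, OF u] in auto)
    have "logdet (msum M {1..U}
              (\<lambda>u. complex_of_real (real (M * N u)) \<cdot>\<^sub>m
                   (AR lam d M (L u) (beta u) * Gam (L u) (gamma u) * Qt0 u *
                    mat_adjoint (Gam (L u) (gamma u)) * mat_adjoint (AR lam d M (L u) (beta u))))
              + 1\<^sub>m M) = V"
      unfolding V_def Fm_def
      by (rule arg_cong[where f = "\<lambda>X. logdet (X + 1\<^sub>m M)"], rule msum_cong)
         (use att L_one in simp)
    moreover have "\<forall>u\<in>{1..U}. psd (L u) (Qt0 u) \<and> Re (mtrace (Qt0 u)) \<le> real (L u) * P u"
      using att L_one by simp
    ultimately show "V \<in> CubSet" unfolding CubSet_def by blast
  next
    fix x assume "x \<in> CubSet"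
    then obtain Qt where x: "x = logdet (msum M {1..U}
              (\<lambda>u. complex_of_real (real (M * N u)) \<cdot>\<^sub>m
                   (AR lam d M (L u) (beta u) * Gam (L u) (gamma u) * Qt u *
                    mat_adjoint (Gam (L u) (gamma u)) * mat_adjoint (AR lam d M (L u) (beta u))))
              + 1\<^sub>m M)"
      and feas: "\<forall>u\<in>{1..U}. psd (L u) (Qt u) \<and> Re (mtrace (Qt u)) \<le> real (L u) * P u"
      unfolding CubSet_def by blast
    have "\<forall>u\<in>{1..U}. \<exists>c. 0 \<le> c \<and> c \<le> cmax u \<and>
      complex_of_real (real (M * N u)) \<cdot>\<^sub>m
                   (AR lam d M (L u) (beta u) * Gam (L u) (gamma u) * Qt u *
                    mat_adjoint (Gam (L u) (gamma u)) * mat_adjoint (AR lam d M (L u) (beta u)))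
      = complex_of_real c \<cdot>\<^sub>m Em M (a u)"
    proof
      fix u assume u: "u \<in> {1..U}"
      have Lu: "L u = 1" using L_one u by auto
      show "\<exists>c. 0 \<le> c \<and> c \<le> cmax u \<and>
      complex_of_real (real (M * N u)) \<cdot>\<^sub>m
                   (AR lam d M (L u) (beta u) * Gam (L u) (gamma u) * Qt u *
                    mat_adjoint (Gam (L u) (gamma u)) * mat_adjoint (AR lam d M (L u) (beta u)))
      = complex_of_real c \<cdot>\<^sub>m Em M (a u)"
        unfolding Lu cmax_def a_def
        by (rule cub_term) (use feas[rule_format, OF u] Lu in auto)
    qed
    then obtain c where c: "\<forall>u\<in>{1..U}. 0 \<le> c u \<and> c u \<le> cmax u \<and>
      complex_of_real (real (M * N u)) \<cdot>\<^sub>m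
                   (AR lam d M (L u) (beta u) * Gam (L u) (gamma u) * Qt u *
                    mat_adjoint (Gam (L u) (gamma u)) * mat_adjoint (AR lam d M (L u) (beta u)))
      = complex_of_real (c u) \<cdot>\<^sub>m Em M (a u)"
      by (metis (no_types, lifting) bchoice)
    have "x = logdet (Fm M {1..U} c a)"
      unfolding x Fm_def
      by (rule arg_cong[where f = "\<lambda>X. logdet (X + 1\<^sub>m M)"], rule msum_cong) (use c in simp)
    also have "\<dots> \<le> V" unfolding V_def by (rule Fm_logdet_le[OF fin ac]) (use c in auto)
    finally show "x \<le> V" .
  qed
  ultimately show ?thesis using CS CU rhs by simp
qed

end
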